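(* Let $0<\epsilon<1$ and let $\bar b,\bar w$ satisfy $b/2\le\bar b\le 2b$ and $w/6\le\bar w\le 6w$. Let $(P_H,P_L)$ be any appropriate partition of $E$ with respect to $\bar b,\bar w,\epsilon$. Let $c>0$ and $s\ge c\cdot m\log(n/\epsilon^2)/(\bar b^{1/4}\epsilon^{9/4})$, let $e_1,\dots,e_s$ be edges drawn independently and uniformly at random from $E$, $S=\{e_1,\dots,e_s\}$, and $Y=\frac1s\sum_{i=1}^s\mathrm{wt}_{P_L}(e_i)$. Then $$b(1-c_H\epsilon)\le m\,\mathbb{E}[Y]\le b.$$ Moreover, if the constant $c$ is large enough (namely $c>1/(2(1-c_H\epsilon))$), then $$\Pr\left[mY<b(1-2c_H\epsilon)\right]<\frac{\epsilon^2}{n}.$$ Here $c_H=1.77\times10^4$.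
   Context: Let $G=(V,E)$ be a bipartite graph with bipartition $V=U\cup L$, $n=|V|$, $m=|E|$; $d_v$ is the degree of $v$; for $e=(u,v)$, $d_e=d_u+d_v-2$; $w$ is the number of wedges (paths with two edges). A butterfly is a set of four distinct vertices $\{u_1,u_2,v_1,v_2\}$, $u_i\in U$, $v_i\in L$, with all four pairs $u_iv_j$ edges; $b$ is the number of butterflies and $b(e)$ the number containing edge $e$. For nonempty $P_L\subseteq E$ and a butterfly $B$: $\mathrm{wt}_{P_L}(B)=0$ if none of its edges is in $P_L$, and $1/\ell$ if exactly $\ell>0$ of its edges are in $P_L$; for an edge $e$, $\mathrm{wt}_{P_L}(e)=0$ if $e\notin P_L$ and $\mathrm{wt}_{P_L}(e)=\sum_{B\ni e}\mathrm{wt}_{P_L}(B)$ otherwise. Given $\bar b,\bar w,\epsilon$, an edge $e$ is heavy if $b(e)>2\bar b^{3/4}/\epsilon^{1/4}$ or $d_e>\bar w/(\epsilon\bar b)^{1/4}$, and light if $b(e)<\bar b^{3/4}/(2\epsilon^{1/4})$ and $d_e<\bar w/(\epsilon\bar b)^{1/4}$. A partition $(P_H,P_L)$ of $E$ is appropriate if every heavy edge is in $P_H$ and every light edge in $P_L$. *)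

theory Defs
  imports "HOL-Probability.Probability"
begin

(* A bipartite graph is given by disjoint finite vertex classes U, L and an
   edge set E \<subseteq> U \<times> L; the edge {u,v} (u \<in> U, v \<in> L) is the pair (u,v). *)

definition degree :: "('a \<times> 'a) set \<Rightarrow> 'a \<Rightarrow> nat" where
  "degree E x = card {e \<in> E. fst e = x \<or> snd e = x}"

definition edge_degree :: "('a \<times> 'a) set \<Rightarrow> 'a \<times> 'a \<Rightarrow> real" where
  "edge_degree E e = real (degree E (fst e)) + real (degree E (snd e)) - 2"

definition wedges :: "('a \<times> 'a) set \<Rightarrow> ('a \<times> 'a) set set" where
  "wedges E = {{e1, e2} | e1 e2. e1 \<in> E \<and> e2 \<in> E \<and> e1 \<noteq> e2 \<and>
                 (fst e1 = fst e2 \<or> snd e1 = snd e2)}"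

definition num_wedges :: "('a \<times> 'a) set \<Rightarrow> nat" where
  "num_wedges E = card (wedges E)"

definition butterflies :: "'a set \<Rightarrow> 'a set \<Rightarrow> ('a \<times> 'a) set \<Rightarrow> 'a set set" where
  "butterflies U L E = {{u1, u2, v1, v2} | u1 u2 v1 v2.
      u1 \<in> U \<and> u2 \<in> U \<and> v1 \<in> L \<and> v2 \<in> L \<and> u1 \<noteq> u2 \<and> v1 \<noteq> v2 \<and>
      (u1, v1) \<in> E \<and> (u1, v2) \<in> E \<and> (u2, v1) \<in> E \<and> (u2, v2) \<in> E}"

definition num_butterflies :: "'a set \<Rightarrow> 'a set \<Rightarrow> ('a \<times> 'a) set \<Rightarrow> nat" where
  "num_butterflies U L E = card (butterflies U L E)"

definition bf_edges :: "('a \<times> 'a) set \<Rightarrow> 'a set \<Rightarrow> ('a \<times> 'a) set" where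
  "bf_edges E B = {e \<in> E. fst e \<in> B \<and> snd e \<in> B}"

definition edge_butterflies :: "'a set \<Rightarrow> 'a set \<Rightarrow> ('a \<times> 'a) set \<Rightarrow> 'a \<times> 'a \<Rightarrow> nat" where
  "edge_butterflies U L E e = card {B \<in> butterflies U L E. e \<in> bf_edges E B}"

definition wt_bf :: "('a \<times> 'a) set \<Rightarrow> ('a \<times> 'a) set \<Rightarrow> 'a set \<Rightarrow> real" where
  "wt_bf E PL B = (let l = card (bf_edges E B \<inter> PL) in if l = 0 then 0 else 1 / real l)"

definition wt_edge :: "'a set \<Rightarrow> 'a set \<Rightarrow> ('a \<times> 'a) set \<Rightarrow> ('a \<times> 'a) set \<Rightarrow> 'a \<times> 'a \<Rightarrow> real" where
  "wt_edge U L E PL e = (if e \<notin> PL then 0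
      else (\<Sum>B \<in> {B \<in> butterflies U L E. e \<in> bf_edges E B}. wt_bf E PL B))"

definition heavy :: "'a set \<Rightarrow> 'a set \<Rightarrow> ('a \<times> 'a) set \<Rightarrow> real \<Rightarrow> real \<Rightarrow> real \<Rightarrow> 'a \<times> 'a \<Rightarrow> bool" where
  "heavy U L E bb ww eps e \<longleftrightarrow>
     real (edge_butterflies U L E e) > 2 * bb powr (3/4) / eps powr (1/4) \<or>
     edge_degree E e > ww / (eps * bb) powr (1/4)"

definition light :: "'a set \<Rightarrow> 'a set \<Rightarrow> ('a \<times> 'a) set \<Rightarrow> real \<Rightarrow> real \<Rightarrow> real \<Rightarrow> 'a \<times> 'a \<Rightarrow> bool" where
  "light U L E bb ww eps e \<longleftrightarrow>
     real (edge_butterflies U L E e) < bb powr (3/4) / (2 * eps powr (1/4)) \<and>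
     edge_degree E e < ww / (eps * bb) powr (1/4)"

definition appropriate :: "'a set \<Rightarrow> 'a set \<Rightarrow> ('a \<times> 'a) set \<Rightarrow> real \<Rightarrow> real \<Rightarrow> real
     \<Rightarrow> ('a \<times> 'a) set \<Rightarrow> ('a \<times> 'a) set \<Rightarrow> bool" where
  "appropriate U L E bb ww eps PH PL \<longleftrightarrow>
     PH \<union> PL = E \<and> PH \<inter> PL = {} \<and>
     (\<forall>e \<in> E. heavy U L E bb ww eps e \<longrightarrow> e \<in> PH) \<and>
     (\<forall>e \<in> E. light U L E bb ww eps e \<longrightarrow> e \<in> PL)"

definition c_H :: real where "c_H = 17700"

(* distribution of (e_1,...,e_s): independent uniform samples from E, indexed by {..<s} *)
definition edge_samples :: "('a \<times> 'a) set \<Rightarrow> nat \<Rightarrow> (nat \<Rightarrow> 'a \<times> 'a) pmf" where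
  "edge_samples E s = Pi_pmf {..<s} undefined (\<lambda>_. pmf_of_set E)"

end

theory Submission
  imports Defs
begin

lemma exp_neg_quad: fixes x :: real assumes x: "0 \<le> x" shows "exp (-x) \<le> 1 - x + x^2/2"
proof -
  let ?g = "\<lambda>t::real. 1 - t + t^2/2 - exp (-t)"
  have d: "\<And>t. (?g has_real_derivative (-1 + t + exp (-t))) (at t)"
    by (auto intro!: derivative_eq_intros)
  have "?g 0 \<le> ?g x"
  proof (rule DERIV_nonneg_imp_nondecreasing[OF x])
    fix y :: real assume "0 \<le> y" "y \<le> x"
    have "0 \<le> -1 + y + exp (-y)" using exp_ge_add_one_self[of "-y"] by linarith
    then show "\<exists>z. (?g has_real_derivative z) (at y) \<and> 0 \<le> z"
      using d[of y] by blast
  qed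
  then show ?thesis by simp
qed

lemma chernoff_lower:
  fixes X :: "'b \<Rightarrow> real" and E :: "'b set"
  assumes fin: "finite E" and ne: "E \<noteq> {}" and Xb: "\<And>e. e \<in> E \<Longrightarrow> 0 \<le> X e \<and> X e \<le> M"
    and M: "M > 0" and mu: "\<mu> = sum X E / card E" "\<mu> > 0" and D: "\<Delta> > 0"
  shows "measure_pmf.prob (Pi_pmf {..<s} d (\<lambda>_. pmf_of_set E))
           {f. (\<Sum>i<s. X (f i)) \<le> real s * (\<mu> - \<Delta>)} \<le> exp (- real s * \<Delta>^2 / (2 * M * \<mu>))"
proof -
  define P where "P = Pi_pmf {..<s} d (\<lambda>_. pmf_of_set E)"
  define l where "l = \<Delta> / (M * \<mu>)"
  have l: "l > 0" using M mu(2) D by (simp add: l_def)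
  define E1 where "E1 = measure_pmf.expectation (pmf_of_set E) (\<lambda>e. exp (- l * X e))"
  have cardpos: "real (card E) > 0" using fin ne by (simp add: card_gt_0_iff)
  have E1eq: "E1 = (\<Sum>e\<in>E. exp (- l * X e)) / card E"
    unfolding E1_def using fin ne by (simp add: integral_pmf_of_set)
  have pt: "exp (- l * X e) \<le> 1 - l * X e + l^2 * M * X e / 2" if e: "e \<in> E" for e
  proof -
    have "exp (- (l * X e)) \<le> 1 - l * X e + (l * X e)^2/2"
      by (rule exp_neg_quad) (use Xb[OF e] l in simp)
    also have "(l * X e)^2 = l^2 * X e * X e" by (simp add: power2_eq_square)
    also have "l^2 * X e * X e \<le> l^2 * X e * M"
      using Xb[OF e] by (intro mult_left_mono) auto
    finally show ?thesis by (simp add: algebra_simps)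
  qed
  have "(\<Sum>e\<in>E. exp (- l * X e)) \<le> (\<Sum>e\<in>E. 1 - l * X e + l^2 * M * X e / 2)"
    by (intro sum_mono pt)
  also have "\<dots> = card E - l * sum X E + l^2 * M * sum X E / 2"
    by (simp add: sum.distrib sum_subtractf sum_distrib_left sum_divide_distrib)
  finally have "E1 \<le> (card E - l * sum X E + l^2 * M * sum X E / 2) / card E"
    unfolding E1eq using cardpos by (simp add: divide_right_mono)
  also have "\<dots> = 1 - l * \<mu> + l^2 * M * \<mu> / 2"
    using cardpos unfolding mu(1) by (simp add: field_simps)
  also have "\<dots> \<le> exp (- l * \<mu> + l^2 * M * \<mu> / 2)"
    using exp_ge_add_one_self[of "- l * \<mu> + l^2 * M * \<mu> / 2"] by linarith
  finally have E1le: "E1 \<le> exp (- l * \<mu> + l^2 * M * \<mu> / 2)" .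
  have E1nn: "0 \<le> E1" unfolding E1eq by (intro divide_nonneg_nonneg sum_nonneg) auto
  define S where "S = (\<lambda>f. \<Sum>i<s. X (f i))"
  have ES: "measure_pmf.expectation P (\<lambda>f. exp (- l * S f)) = E1 ^ s"
  proof -
    have "(\<lambda>f. exp (- l * S f)) = (\<lambda>f. \<Prod>i\<in>{..<s}. exp (- l * X (f i)))"
      by (simp add: S_def sum_distrib_left exp_sum flip: sum_negf)
    then have "measure_pmf.expectation P (\<lambda>f. exp (- l * S f))
       = (\<Prod>i\<in>{..<s}. measure_pmf.expectation (pmf_of_set E) (\<lambda>v. exp (- l * X v)))"
      unfolding P_def
      by (simp, subst expectation_prod_Pi_pmf) (auto intro!: integrable_measure_pmf_finite simp: fin ne)
    also have "\<dots> = E1 ^ s" by (simp add: E1_def)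
    finally show ?thesis .
  qed
  have "{f. S f \<le> real s * (\<mu> - \<Delta>)} \<subseteq> {f \<in> space (measure_pmf P). exp (- l * S f) \<ge> exp (- l * (real s * (\<mu> - \<Delta>)))}"
    using l by auto
  then have "measure_pmf.prob P {f. S f \<le> real s * (\<mu> - \<Delta>)} \<le>
       measure_pmf.prob P {f \<in> space (measure_pmf P). exp (- l * S f) \<ge> exp (- l * (real s * (\<mu> - \<Delta>)))}"
    by (intro measure_pmf.finite_measure_mono) auto
  also have "\<dots> \<le> measure_pmf.expectation P (\<lambda>f. exp (- l * S f)) / exp (- l * (real s * (\<mu> - \<Delta>)))"
  proof (rule integral_Markov_inequality_measure)
    show "integrable (measure_pmf P) (\<lambda>f. exp (- l * S f))"
      unfolding P_def S_def
      by (simp add: sum_distrib_left exp_sum flip: sum_negf,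
          intro integrable_prod_Pi_pmf) (auto intro!: integrable_measure_pmf_finite simp: fin ne)
  qed auto
  also have "\<dots> = E1 ^ s / exp (- l * (real s * (\<mu> - \<Delta>)))" by (simp only: ES)
  also have "\<dots> \<le> exp (- l * \<mu> + l^2 * M * \<mu> / 2) ^ s / exp (- l * (real s * (\<mu> - \<Delta>)))"
    by (intro divide_right_mono power_mono E1le E1nn) auto
  also have "\<dots> = exp (real s * (- l * \<mu> + l^2 * M * \<mu> / 2) - (- l * (real s * (\<mu> - \<Delta>))))"
    by (simp only: exp_of_nat_mult[symmetric] exp_diff[symmetric])
  also have "real s * (- l * \<mu> + l^2 * M * \<mu> / 2) - (- l * (real s * (\<mu> - \<Delta>))) = - real s * \<Delta>^2 / (2 * M * \<mu>)"
    using M mu(2) D unfolding l_def by (simp add: field_simps power2_eq_square)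
  finally show ?thesis by (simp add: S_def P_def)
qed

lemma bf_struct:
  assumes disj: "U \<inter> L = {}" and EUL: "E \<subseteq> U \<times> L" and B: "B \<in> butterflies U L E"
  obtains u1 u2 v1 v2 where "B = {u1,u2,v1,v2}" "u1 \<in> U" "u2 \<in> U" "v1 \<in> L" "v2 \<in> L"
    "u1 \<noteq> u2" "v1 \<noteq> v2" "(u1,v1) \<in> E" "(u1,v2) \<in> E" "(u2,v1) \<in> E" "(u2,v2) \<in> E"
    "bf_edges E B = {(u1,v1),(u1,v2),(u2,v1),(u2,v2)}"
proof -
  from B obtain u1 u2 v1 v2 where h: "B = {u1,u2,v1,v2}" "u1 \<in> U" "u2 \<in> U" "v1 \<in> L" "v2 \<in> L"
    "u1 \<noteq> u2" "v1 \<noteq> v2" "(u1,v1) \<in> E" "(u1,v2) \<in> E" "(u2,v1) \<in> E" "(u2,v2) \<in> E"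
    unfolding butterflies_def by blast
  have "bf_edges E B = {(u1,v1),(u1,v2),(u2,v1),(u2,v2)}"
  proof
    show "bf_edges E B \<subseteq> {(u1,v1),(u1,v2),(u2,v1),(u2,v2)}"
    proof
      fix e assume e: "e \<in> bf_edges E B"
      then have "e \<in> E" "fst e \<in> B" "snd e \<in> B" unfolding bf_edges_def by auto
      with EUL have "fst e \<in> U" "snd e \<in> L" by auto
      with \<open>fst e \<in> B\<close> \<open>snd e \<in> B\<close> h(1-5) disj have "fst e \<in> {u1,u2}" "snd e \<in> {v1,v2}" by auto
      then show "e \<in> {(u1,v1),(u1,v2),(u2,v1),(u2,v2)}" by (cases e) auto
    qed
    show "{(u1,v1),(u1,v2),(u2,v1),(u2,v2)} \<subseteq> bf_edges E B"
      using h unfolding bf_edges_def by auto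
  qed
  with h that show ?thesis by blast
qed

lemma finite_bf:
  assumes "finite U" "finite L"
  shows "finite (butterflies U L E)"
proof (rule finite_subset[of _ "Pow (U \<union> L)"])
  show "butterflies U L E \<subseteq> Pow (U \<union> L)" unfolding butterflies_def by auto
qed (use assms in auto)

lemma card_bfe:
  assumes disj: "U \<inter> L = {}" and EUL: "E \<subseteq> U \<times> L" and B: "B \<in> butterflies U L E"
  shows "card (bf_edges E B) = 4"
proof -
  obtain u1 u2 v1 v2 where h: "u1 \<noteq> u2" "v1 \<noteq> v2" "bf_edges E B = {(u1,v1),(u1,v2),(u2,v1),(u2,v2)}"
    using bf_struct[OF disj EUL B] by metis
  then show ?thesis by auto
qed

lemma bfe_sub: "bf_edges E B \<subseteq> E" unfolding bf_edges_def by auto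

lemma wsum:
  assumes finE: "finite E" and finB: "finite (butterflies U L E)" and PL: "PL \<subseteq> E"
  shows "(\<Sum>e\<in>E. wt_edge U L E PL e) = real (card {B \<in> butterflies U L E. bf_edges E B \<inter> PL \<noteq> {}})"
proof -
  let ?BF = "butterflies U L E"
  have "(\<Sum>e\<in>E. wt_edge U L E PL e) = (\<Sum>e\<in>E. \<Sum>B\<in>?BF. if e \<in> PL \<and> e \<in> bf_edges E B then wt_bf E PL B else 0)"
    unfolding wt_edge_def by (intro sum.cong refl) (auto simp: sum.inter_filter[OF finB, symmetric] intro!: sum.cong)
  also have "\<dots> = (\<Sum>B\<in>?BF. \<Sum>e\<in>E. if e \<in> bf_edges E B \<inter> PL then wt_bf E PL B else 0)"
    by (subst sum.swap) (auto intro!: sum.cong)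
  also have "\<dots> = (\<Sum>B\<in>?BF. real (card (bf_edges E B \<inter> PL)) * wt_bf E PL B)"
  proof (intro sum.cong refl)
    fix B assume "B \<in> ?BF"
    have "bf_edges E B \<inter> PL \<subseteq> E" using bfe_sub by blast
    then have "E \<inter> (bf_edges E B \<inter> PL) = bf_edges E B \<inter> PL"
      "E \<inter> {e \<in> bf_edges E B. e \<in> PL} = bf_edges E B \<inter> PL" by blast+
    then show "(\<Sum>e\<in>E. if e \<in> bf_edges E B \<inter> PL then wt_bf E PL B else 0) = real (card (bf_edges E B \<inter> PL)) * wt_bf E PL B"
      using finE by (simp add: sum.If_cases)
  qed
  also have "\<dots> = (\<Sum>B\<in>?BF. if bf_edges E B \<inter> PL \<noteq> {} then 1 else 0)"
  proof (intro sum.cong refl)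
    fix B assume "B \<in> ?BF"
    have fin: "finite (bf_edges E B \<inter> PL)" using finite_subset[OF _ finE] bfe_sub by blast
    show "real (card (bf_edges E B \<inter> PL)) * wt_bf E PL B = (if bf_edges E B \<inter> PL \<noteq> {} then 1 else 0)"
      using fin unfolding wt_bf_def Let_def by auto
  qed
  also have "\<dots> = real (card {B \<in> ?BF. bf_edges E B \<inter> PL \<noteq> {}})"
    using finB by (simp add: sum.If_cases Int_def)
  finally show ?thesis .
qed

lemma sum_eb:
  assumes disj: "U \<inter> L = {}" and EUL: "E \<subseteq> U \<times> L" and finE: "finite E" and finB: "finite (butterflies U L E)"
  shows "(\<Sum>e\<in>E. real (edge_butterflies U L E e)) \<le> 4 * real (num_butterflies U L E)"
proof -
  let ?BF = "butterflies U L E"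
  have "(\<Sum>e\<in>E. real (edge_butterflies U L E e)) = (\<Sum>e\<in>E. \<Sum>B\<in>?BF. if e \<in> bf_edges E B then 1 else 0)"
    unfolding edge_butterflies_def using finB by (simp add: sum.If_cases Int_def)
  also have "\<dots> = (\<Sum>B\<in>?BF. \<Sum>e\<in>E. if e \<in> bf_edges E B then 1 else 0)"
    by (rule sum.swap)
  also have "\<dots> = (\<Sum>B\<in>?BF. 4)"
  proof (intro sum.cong refl)
    fix B assume B: "B \<in> ?BF"
    have "E \<inter> bf_edges E B = bf_edges E B" using bfe_sub by blast
    then show "(\<Sum>e\<in>E. if e \<in> bf_edges E B then 1 else 0) = (4::real)"
      using finE card_bfe[OF disj EUL B] by (simp add: sum.If_cases)
  qed
  also have "\<dots> = 4 * real (num_butterflies U L E)" unfolding num_butterflies_def by simp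
  finally show ?thesis by simp
qed

lemma wt_le:
  assumes finB: "finite (butterflies U L E)"
  shows "0 \<le> wt_edge U L E PL e \<and> wt_edge U L E PL e \<le> real (edge_butterflies U L E e)"
proof -
  have w: "0 \<le> wt_bf E PL B \<and> wt_bf E PL B \<le> 1" for B
    unfolding wt_bf_def Let_def by auto
  have fin: "finite {B \<in> butterflies U L E. e \<in> bf_edges E B}" using finB by auto
  have "(\<Sum>B \<in> {B \<in> butterflies U L E. e \<in> bf_edges E B}. wt_bf E PL B) \<le> (\<Sum>B \<in> {B \<in> butterflies U L E. e \<in> bf_edges E B}. 1)"
    using w by (intro sum_mono) auto
  then show ?thesis unfolding wt_edge_def edge_butterflies_def using w by (auto intro!: sum_nonneg)
qed

lemma de_eq:
  assumes disj: "U \<inter> L = {}" and EUL: "E \<subseteq> U \<times> L" and finE: "finite E" and e: "e \<in> E"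
  shows "edge_degree E e = real (card {e2\<in>E. e2 \<noteq> e \<and> (fst e2 = fst e \<or> snd e2 = snd e)})"
proof -
  define A where "A = {e'\<in>E. fst e' = fst e}"
  define B where "B = {e'\<in>E. snd e' = snd e}"
  have fe: "fst e \<in> U" "snd e \<in> L" using e EUL by auto
  have dA: "degree E (fst e) = card A"
    unfolding degree_def A_def
    by (rule arg_cong[where f=card]) (use EUL disj fe in auto)
  have dB: "degree E (snd e) = card B"
    unfolding degree_def B_def
    by (rule arg_cong[where f=card]) (use EUL disj fe in auto)
  have AB: "A \<inter> B = {e}" unfolding A_def B_def using e by (auto simp: prod_eq_iff)
  have fin: "finite A" "finite B" using finE unfolding A_def B_def by auto
  have setq: "{e2\<in>E. e2 \<noteq> e \<and> (fst e2 = fst e \<or> snd e2 = snd e)} = (A \<union> B) - {e}"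
    unfolding A_def B_def by auto
  have "card A + card B = card (A \<union> B) + card (A \<inter> B)" by (rule card_Un_Int) (use fin in auto)
  then have "card A + card B = card (A \<union> B) + 1" using AB by simp
  moreover have "card ((A \<union> B) - {e}) = card (A \<union> B) - 1"
    using AB by (intro card_Diff_singleton) auto
  moreover have "card (A \<union> B) \<ge> 1"
  proof -
    have "e \<in> A \<union> B" using AB by blast
    then have "card (A \<union> B) > 0" using fin by (auto simp: card_gt_0_iff)
    then show ?thesis by simp
  qed
  ultimately have h: "real (card ((A \<union> B) - {e})) = real (card (A \<union> B)) - 1"
    "real (card A) + real (card B) = real (card (A \<union> B)) + 1"
    by (simp_all add: of_nat_diff)
  show ?thesis unfolding edge_degree_def dA dB setq using h by linarith
qed

lemma sum_de:
  assumes disj: "U \<inter> L = {}" and EUL: "E \<subseteq> U \<times> L" and finE: "finite E"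
  shows "(\<Sum>e\<in>E. edge_degree E e) \<le> 2 * real (num_wedges E)"
proof -
  define F where "F = (\<lambda>e. {e2\<in>E. e2 \<noteq> e \<and> (fst e2 = fst e \<or> snd e2 = snd e)})"
  define Ord where "Ord = Sigma E F"
  define g where "g = (\<lambda>p::('a\<times>'a)\<times>('a\<times>'a). {fst p, snd p})"
  have finF: "finite (F e)" for e using finE unfolding F_def by auto
  have finO: "finite Ord" unfolding Ord_def using finE finF by auto
  have "(\<Sum>e\<in>E. edge_degree E e) = (\<Sum>e\<in>E. real (card (F e)))"
    by (intro sum.cong refl) (simp only: de_eq[OF disj EUL finE] F_def)
  also have "\<dots> = real (card Ord)" unfolding Ord_def using finE finF
    by (simp add: card_SigmaI)
  also have "real (card Ord) \<le> 2 * real (num_wedges E)"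
  proof -
    have eq: "(\<Union>W\<in>g ` Ord. {p\<in>Ord. g p = W}) = Ord" by blast
    have "card (\<Union>W\<in>g ` Ord. {p\<in>Ord. g p = W}) \<le> (\<Sum>W\<in>g ` Ord. card {p\<in>Ord. g p = W})"
      by (rule card_UN_le) (use finO in simp)
    then have "card Ord \<le> (\<Sum>W\<in>g ` Ord. card {p\<in>Ord. g p = W})"
      unfolding eq .
    also have "\<dots> \<le> (\<Sum>W\<in>g ` Ord. 2)"
    proof (intro sum_mono)
      fix W assume "W \<in> g ` Ord"
      then obtain p0 where "W = g p0" by blast
      then obtain a b where W: "W = {a,b}" unfolding g_def by blast
      have "{p\<in>Ord. g p = W} \<subseteq> {(a,b),(b,a)}"
      proof
        fix p assume "p \<in> {p\<in>Ord. g p = W}"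
        then have "{fst p, snd p} = {a,b}" unfolding W g_def by simp
        then have "(fst p = a \<and> snd p = b) \<or> (fst p = b \<and> snd p = a)"
          by (simp only: doubleton_eq_iff)
        then show "p \<in> {(a,b),(b,a)}" by (cases p) simp
      qed
      then have "card {p\<in>Ord. g p = W} \<le> card {(a,b),(b,a)}" by (intro card_mono) simp_all
      also have "\<dots> \<le> 2" by (rule card_insert_le_m1) simp_all
      finally show "card {p\<in>Ord. g p = W} \<le> 2" .
    qed
    also have "\<dots> = 2 * card (g ` Ord)" by simp
    also have "card (g ` Ord) \<le> card (wedges E)"
    proof (rule card_mono)
      have "wedges E \<subseteq> Pow E" unfolding wedges_def by blast
      then show "finite (wedges E)" using finE by (meson finite_Pow_iff finite_subset)
      show "g ` Ord \<subseteq> wedges E"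
      proof
        fix W assume "W \<in> g ` Ord"
        then obtain p where p: "p \<in> Ord" "W = {fst p, snd p}" unfolding g_def by blast
        then have "fst p \<in> E" "snd p \<in> E" "snd p \<noteq> fst p" "fst (snd p) = fst (fst p) \<or> snd (snd p) = snd (fst p)"
          unfolding Ord_def F_def by auto
        then show "W \<in> wedges E" unfolding wedges_def p(2)
          by (intro CollectI exI[of _ "fst p"] exI[of _ "snd p"]) auto
      qed
    qed
    finally have "card Ord \<le> 2 * card (wedges E)" by simp
    then show ?thesis unfolding num_wedges_def by linarith
  qed
  finally show ?thesis .
qed

lemma K4_bound:
  fixes r :: real assumes "1/2 \<le> r" "r \<le> 2"
  shows "(8*r+12)^4 \<le> 566400 * r"
proof (cases "r \<le> 1")
  case True
  have K: "0 < 8*r+12" "8*r+12 \<le> 20" using assms True by auto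
  have "(8*r+12)^3 \<le> 20^3" by (rule power_mono) (use K in auto)
  then have "(8*r+12)^3 * (8*r+12) \<le> 20^3 * (8*r+12)" using K by (intro mult_right_mono) auto
  then have "(8*r+12)^4 \<le> 8000 * (8*r+12)" by (simp add: power_Suc2[symmetric] del: power_Suc)
  moreover have "8000 * (8*r+12) \<le> 566400*r" using assms by (simp add: algebra_simps)
  ultimately show ?thesis by linarith
next
  case False
  have K: "0 < 8*r+12" "8*r+12 \<le> 28" using assms False by auto
  have "(8*r+12)^3 \<le> 28^3" by (rule power_mono) (use K in auto)
  then have "(8*r+12)^3 * (8*r+12) \<le> 28^3 * (8*r+12)" using K by (intro mult_right_mono) auto
  then have "(8*r+12)^4 \<le> 21952 * (8*r+12)" by (simp add: power_Suc2[symmetric] del: power_Suc)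
  moreover have "21952 * (8*r+12) \<le> 566400*r" using assms False by (simp add: algebra_simps)
  ultimately show ?thesis by linarith
qed

lemma final_arith:
  fixes h q r :: real
  assumes r: "1/2 \<le> r" "r \<le> 2" and q: "q > 0" and h: "4 \<le> h" "h \<le> (8*r+12)*q"
  shows "h^2/2 \<le> 17700 * r * q^4"
proof -
  define K where "K = 8*r+12"
  have K: "K > 0" using r by (simp add: K_def)
  have K4: "K^4 \<le> 566400 * r" using K4_bound[OF r] by (simp add: K_def)
  have "4 \<le> K * q" using h by (simp add: K_def)
  then have "4^2 \<le> (K*q)^2" by (rule power_mono) simp
  then have q2: "16 \<le> K^2 * q^2" by (simp add: power_mult_distrib)
  have "h^2 \<le> (K*q)^2" using h by (intro power_mono) (auto simp: K_def)
  also have "\<dots> = K^2 * q^2" by (simp add: power_mult_distrib)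
  also have "K^2 * q^2 * 16 \<le> K^2 * q^2 * (K^2 * q^2)"
    using q2 by (intro mult_left_mono) auto
  then have "K^2 * q^2 * 16 \<le> K^4 * q^4" by (simp add: power_mult_distrib algebra_simps power4_eq_xxxx power2_eq_square)
  then have "K^2 * q^2 * 16 \<le> 566400 * r * q^4"
    using K4 q by (smt (verit) mult_right_mono zero_le_power)
  then have "K^2 * q^2 \<le> 35400 * r * q^4" by linarith
  finally show ?thesis by linarith
qed

lemma finite_wedges: "finite E \<Longrightarrow> finite (wedges E)"
proof -
  assume "finite E"
  moreover have "wedges E \<subseteq> Pow E" unfolding wedges_def by blast
  ultimately show ?thesis by (meson finite_Pow_iff finite_subset)
qed

lemma q_facts:
  fixes eps bb :: real assumes "eps > 0" "bb > 0"
  shows "(eps*bb) powr (1/4) > 0" "((eps*bb) powr (1/4))^4 = eps*bb"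
    "bb powr (3/4) / (2 * eps powr (1/4)) = bb / (2 * (eps*bb) powr (1/4))"
    "2 * bb powr (3/4) / eps powr (1/4) = 2 * bb / ((eps*bb) powr (1/4))"
proof -
  let ?q = "(eps*bb) powr (1/4)"
  show "?q > 0" using assms by simp
  have "?q^4 = ?q powr (real 4)" using assms by (subst powr_realpow) auto
  also have "\<dots> = (eps*bb) powr (1/4 * 4)" by (subst powr_powr) simp
  also have "\<dots> = eps*bb" using assms by simp
  finally show "?q^4 = eps*bb" .
  have qm: "?q = eps powr (1/4) * bb powr (1/4)" using assms by (simp add: powr_mult)
  have b1: "bb powr (3/4) * bb powr (1/4) = bb" using assms by (simp add: powr_add[symmetric])
  have p1: "eps powr (1/4) > 0" "bb powr (1/4) > 0" using assms by auto
  show "bb powr (3/4) / (2 * eps powr (1/4)) = bb / (2 * ?q)"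
    unfolding qm using p1 b1 by (simp add: field_simps)
  show "2 * bb powr (3/4) / eps powr (1/4) = 2 * bb / ?q"
    unfolding qm using p1 b1 by (simp add: field_simps)
qed

lemma bad_bound:
  fixes U L :: "'a set" and E PH PL :: "('a \<times> 'a) set" and eps bb ww :: real
  assumes finU: "finite U" and finL: "finite L" and disj: "U \<inter> L = {}"
    and EUL: "E \<subseteq> U \<times> L"
    and eps: "0 < eps"
    and bb: "real (num_butterflies U L E) / 2 \<le> bb" "bb \<le> 2 * real (num_butterflies U L E)"
    and ww: "real (num_wedges E) / 6 \<le> ww"
    and part: "appropriate U L E bb ww eps PH PL"
  shows "real (card {B \<in> butterflies U L E. bf_edges E B \<inter> PL = {}}) \<le> c_H * eps * real (num_butterflies U L E)"
proof (cases "{B \<in> butterflies U L E. bf_edges E B \<inter> PL = {}} = {}")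
  case True
  then show ?thesis using eps by (simp only: True card.empty of_nat_0 c_H_def) simp
next
  case False
  let ?BF = "butterflies U L E"
  define Bad where "Bad = {B \<in> ?BF. bf_edges E B \<inter> PL = {}}"
  define b where "b = real (num_butterflies U L E)"
  define w where "w = real (num_wedges E)"
  have finE: "finite E" using finU finL EUL by (meson finite_SigmaI finite_subset)
  have finB: "finite ?BF" using finite_bf[OF finU finL] .
  from False obtain B0 where B0: "B0 \<in> Bad" unfolding Bad_def by blast
  then have B0BF: "B0 \<in> ?BF" unfolding Bad_def by simp
  have "card ?BF > 0" using B0BF finB by (auto simp: card_gt_0_iff)
  then have bpos: "b > 0" unfolding b_def num_butterflies_def by simp
  have bbpos: "bb > 0" using bb bpos unfolding b_def by linarith
  define q where "q = (eps*bb) powr (1/4)"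
  have qpos: "q > 0" and q4: "q^4 = eps*bb"
    and Teq: "bb powr (3/4) / (2 * eps powr (1/4)) = bb / (2 * q)"
    using q_facts[OF eps bbpos] unfolding q_def by auto
  define T where "T = bb / (2*q)"
  define W where "W = ww / q"
  have Tpos: "T > 0" using bbpos qpos by (simp add: T_def)
  obtain u1 u2 v1 v2 where bs: "B0 = {u1,u2,v1,v2}" "u1 \<in> U" "u2 \<in> U" "v1 \<in> L" "v2 \<in> L"
    "u1 \<noteq> u2" "v1 \<noteq> v2" "(u1,v1) \<in> E" "(u1,v2) \<in> E" "(u2,v1) \<in> E" "(u2,v2) \<in> E"
    "bf_edges E B0 = {(u1,v1),(u1,v2),(u2,v1),(u2,v2)}"
    by (rule bf_struct[OF disj EUL B0BF])
  have "{(u1,v1),(u1,v2)} \<in> wedges E"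
    unfolding wedges_def using bs(7,8,9) by (intro CollectI exI[of _ "(u1,v1)"] exI[of _ "(u1,v2)"]) simp
  then have "card (wedges E) > 0" using finite_wedges[OF finE] card_gt_0_iff by blast
  then have wpos: "w > 0" unfolding w_def num_wedges_def by simp
  have wwpos: "ww > 0" using ww wpos unfolding w_def by linarith
  have Wpos: "W > 0" using wwpos qpos by (simp add: W_def)
  define H where "H = E - PL"
  have finH: "finite H" using finE by (simp add: H_def)
  have nonlight: "real (edge_butterflies U L E e) \<ge> T \<or> edge_degree E e \<ge> W" if e: "e \<in> H" for e
  proof -
    have "\<not> light U L E bb ww eps e" using part e unfolding appropriate_def H_def by blast
    then show ?thesis unfolding light_def Teq T_def W_def q_def by linarith
  qed
  define HA where "HA = {e \<in> H. real (edge_butterflies U L E e) \<ge> T}"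
  define HD where "HD = {e \<in> H. edge_degree E e \<ge> W}"
  have HAD: "H \<subseteq> HA \<union> HD" using nonlight unfolding HA_def HD_def by blast
  have finHA: "finite HA" "finite HD" using finH unfolding HA_def HD_def by auto
  have "card H \<le> card (HA \<union> HD)" by (intro card_mono HAD) (use finHA in auto)
  also have "\<dots> \<le> card HA + card HD" by (rule card_Un_le)
  finally have hle: "real (card H) \<le> real (card HA) + real (card HD)" by linarith
  have "real (card HA) * T = (\<Sum>e\<in>HA. T)" by simp
  also have "\<dots> \<le> (\<Sum>e\<in>HA. real (edge_butterflies U L E e))" by (intro sum_mono) (auto simp: HA_def)
  also have "\<dots> \<le> (\<Sum>e\<in>E. real (edge_butterflies U L E e))"
    by (intro sum_mono2 finE) (auto simp: HA_def H_def)
  also have "\<dots> \<le> 4 * b" unfolding b_def by (rule sum_eb[OF disj EUL finE finB])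
  finally have "real (card HA) * T \<le> 4 * b" .
  then have hA: "real (card HA) \<le> 8 * b / bb * q"
    using Tpos bbpos qpos unfolding T_def by (simp add: field_simps)
  have "real (card HD) * W = (\<Sum>e\<in>HD. W)" by simp
  also have "\<dots> \<le> (\<Sum>e\<in>HD. edge_degree E e)" by (intro sum_mono) (auto simp: HD_def)
  also have "\<dots> \<le> (\<Sum>e\<in>E. edge_degree E e)"
    by (intro sum_mono2 finE) (auto simp: HD_def H_def de_eq[OF disj EUL finE])
  also have "\<dots> \<le> 2 * w" unfolding w_def by (rule sum_de[OF disj EUL finE])
  finally have "real (card HD) * W \<le> 2 * w" .
  then have "real (card HD) \<le> 2 * w / ww * q"
    using Wpos wwpos qpos unfolding W_def by (simp add: field_simps)
  also have "2 * w / ww * q \<le> 12 * q"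
  proof -
    have "2 * w / ww \<le> 12" using ww wwpos unfolding w_def by (simp add: field_simps)
    then show ?thesis using qpos by (intro mult_right_mono) auto
  qed
  finally have hD: "real (card HD) \<le> 12 * q" .
  define r where "r = b / bb"
  have r: "1/2 \<le> r" "r \<le> 2" using bb bpos bbpos unfolding r_def b_def by (auto simp: field_simps)
  have hup: "real (card H) \<le> (8*r+12)*q" using hle hA hD unfolding r_def by (simp add: algebra_simps)
  have sub0: "bf_edges E B0 \<subseteq> H" using B0 bfe_sub unfolding Bad_def H_def by blast
  have "4 = card (bf_edges E B0)" using card_bfe[OF disj EUL B0BF] by simp
  also have "\<dots> \<le> card H" by (intro card_mono finH sub0)
  finally have h4: "4 \<le> real (card H)" by simp
  \<comment> \<open>injection of bad butterflies into 2-subsets of H\<close>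
  define f where "f = (\<lambda>B. SOME S. S \<subseteq> bf_edges E B \<and> card S = 2 \<and> fst ` S \<union> snd ` S = B)"
  have fprop: "f B \<subseteq> bf_edges E B \<and> card (f B) = 2 \<and> fst ` (f B) \<union> snd ` (f B) = B" if B: "B \<in> ?BF" for B
  proof -
    obtain u1 u2 v1 v2 where bs: "B = {u1,u2,v1,v2}" "u1 \<in> U" "u2 \<in> U" "v1 \<in> L" "v2 \<in> L"
    "u1 \<noteq> u2" "v1 \<noteq> v2" "(u1,v1) \<in> E" "(u1,v2) \<in> E" "(u2,v1) \<in> E" "(u2,v2) \<in> E"
    "bf_edges E B = {(u1,v1),(u1,v2),(u2,v1),(u2,v2)}"
    by (rule bf_struct[OF disj EUL B])
    have "{(u1,v1),(u2,v2)} \<subseteq> bf_edges E B \<and> card {(u1,v1),(u2,v2)} = 2 \<and>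
          fst ` {(u1,v1),(u2,v2)} \<union> snd ` {(u1,v1),(u2,v2)} = B"
      using bs(1,6,7,12) by auto
    then show ?thesis unfolding f_def by (rule someI)
  qed
  have "card Bad \<le> card {S. S \<subseteq> H \<and> card S = 2}"
  proof (rule card_inj_on_le)
    show "inj_on f Bad"
    proof (rule inj_onI)
      fix B1 B2 assume "B1 \<in> Bad" "B2 \<in> Bad" "f B1 = f B2"
      then show "B1 = B2" using fprop unfolding Bad_def by (metis (no_types, lifting) mem_Collect_eq)
    qed
    show "f ` Bad \<subseteq> {S. S \<subseteq> H \<and> card S = 2}"
    proof
      fix S assume "S \<in> f ` Bad"
      then obtain B where B: "B \<in> Bad" "S = f B" by blast
      then have "B \<in> ?BF" "bf_edges E B \<inter> PL = {}" unfolding Bad_def by auto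
      then show "S \<in> {S. S \<subseteq> H \<and> card S = 2}" using fprop[of B] bfe_sub[of E B] B(2)
        unfolding H_def by blast
    qed
    show "finite {S. S \<subseteq> H \<and> card S = 2}" using finH by simp
  qed
  also have "\<dots> = card H choose 2" using n_subsets[OF finH] .
  also have "\<dots> = card H * (card H - 1) div 2" by (rule choose_two)
  finally have "real (card Bad) \<le> real (card H * (card H - 1) div 2)" by linarith
  also have "\<dots> \<le> real (card H * (card H - 1)) / 2" using of_nat_div_le_of_nat[of "card H * (card H - 1)" 2] by simp
  also have "\<dots> \<le> real (card H)^2 / 2"
  proof -
    have "card H * (card H - 1) \<le> card H * card H" by simp
    then have "real (card H * (card H - 1)) \<le> real (card H)^2" unfolding power2_eq_square
      by (metis of_nat_le_iff of_nat_mult)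
    then show ?thesis by simp
  qed
  also have "\<dots> \<le> 17700 * r * q^4" by (rule final_arith[OF r qpos h4 hup])
  also have "\<dots> = c_H * eps * b" unfolding q4 r_def c_H_def using bbpos by simp
  finally show ?thesis unfolding Bad_def b_def .
qed

theorem lemma11:
  fixes U L :: "'a set" and E PH PL :: "('a \<times> 'a) set"
    and eps bb ww c :: real and s :: nat
  defines "n \<equiv> card (U \<union> L)" and "m \<equiv> card E"
    and "b \<equiv> real (num_butterflies U L E)" and "w \<equiv> real (num_wedges E)"
    and "Y \<equiv> (\<lambda>f :: nat \<Rightarrow> 'a \<times> 'a. (1 / real s) * (\<Sum>i<s. wt_edge U L E PL (f i)))"
  assumes finU: "finite U" and finL: "finite L" and disj: "U \<inter> L = {}"
    and EUL: "E \<subseteq> U \<times> L" and Ene: "E \<noteq> {}"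
    and eps: "0 < eps" "eps < 1"
    and bb: "b / 2 \<le> bb" "bb \<le> 2 * b"
    and ww: "w / 6 \<le> ww" "ww \<le> 6 * w"
    and part: "appropriate U L E bb ww eps PH PL"
    and c: "c > 0"
    and s: "real s \<ge> c * real m * ln (real n / eps\<^sup>2) / (bb powr (1/4) * eps powr (9/4))"
  shows "b * (1 - c_H * eps) \<le> real m * measure_pmf.expectation (edge_samples E s) Y
         \<and> real m * measure_pmf.expectation (edge_samples E s) Y \<le> b
         \<and> (c > 1 / (2 * (1 - c_H * eps)) \<longrightarrow>
             measure_pmf.prob (edge_samples E s) {f. real m * Y f < b * (1 - 2 * c_H * eps)}
               < eps\<^sup>2 / real n)"
proof -
  let ?BF = "butterflies U L E"
  let ?X = "wt_edge U L E PL"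
  let ?P = "edge_samples E s"
  have finE: "finite E" using finU finL EUL by (meson finite_SigmaI finite_subset)
  have finB: "finite ?BF" using finite_bf[OF finU finL] .
  have PLE: "PL \<subseteq> E" using part unfolding appropriate_def by blast
  have PHPL: "PH \<inter> PL = {}" using part unfolding appropriate_def by blast
  have mpos: "real m > 0" using finE Ene unfolding m_def by (simp add: card_gt_0_iff)
  obtain e0 where e0: "e0 \<in> E" using Ene by blast
  have "fst e0 \<in> U \<union> L" using e0 EUL by auto
  then have "card (U \<union> L) > 0" using finU finL by (auto simp: card_gt_0_iff)
  then have npos: "real n \<ge> 1" unfolding n_def by simp
  have eps2: "eps^2 > 0" "eps^2 < 1" using eps by (auto simp: power_less_one_iff)
  have N1: "real n / eps^2 > 1" using npos eps2 by (simp add: field_simps)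
  have lnpos: "ln (real n / eps^2) > 0" using N1 by simp
  have Xnn: "\<And>e. 0 \<le> ?X e" using wt_le[OF finB] by blast
  have Ynn: "0 \<le> Y f" for f
  proof -
    have "0 \<le> (\<Sum>i<s. ?X (f i))" by (intro sum_nonneg Xnn)
    then show ?thesis unfolding Y_def by simp
  qed
  define G where "G = card {B \<in> ?BF. bf_edges E B \<inter> PL \<noteq> {}}"
  define Bd where "Bd = card {B \<in> ?BF. bf_edges E B \<inter> PL = {}}"
  have GB: "real G + real Bd = b"
  proof -
    have "{B \<in> ?BF. bf_edges E B \<inter> PL = {}} = ?BF - {B \<in> ?BF. bf_edges E B \<inter> PL \<noteq> {}}" by blast
    then have "Bd = card ?BF - G" unfolding Bd_def G_def using finB by (simp add: card_Diff_subset)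
    moreover have "G \<le> card ?BF" unfolding G_def using finB by (intro card_mono) auto
    ultimately show ?thesis unfolding b_def num_butterflies_def by simp
  qed
  have Wsum: "(\<Sum>e\<in>E. ?X e) = real G" unfolding G_def by (rule wsum[OF finE finB PLE])
  have Bdle: "real Bd \<le> c_H * eps * b"
    unfolding Bd_def b_def
    by (rule bad_bound[OF finU finL disj EUL eps(1) _ _ _ part]) (use bb ww in \<open>auto simp: b_def w_def\<close>)
  show ?thesis
  proof (cases "b = 0")
    case True
    then have "card ?BF = 0" unfolding b_def num_butterflies_def by simp
    then have BFe: "?BF = {}" using finB by simp
    have X0: "?X e = 0" for e unfolding wt_edge_def BFe by simp
    have Y0: "Y f = 0" for f unfolding Y_def X0 by simp
    have "{f. real m * Y f < b * (1 - 2 * c_H * eps)} = {}" using True Y0 by simp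
    have Yz: "Y = (\<lambda>_. 0)" using Y0 by (simp add: fun_eq_iff)
    then show ?thesis using True Y0 eps npos by simp
  next
    case False
    have bpos: "b > 0" using False unfolding b_def by simp
    have bbpos: "bb > 0" using bb bpos by linarith
    define q where "q = (eps*bb) powr (1/4)"
    have qpos: "q > 0" and q4: "q^4 = eps*bb"
      and Teq: "2 * bb powr (3/4) / eps powr (1/4) = 2 * bb / q"
      using q_facts[OF eps(1) bbpos] unfolding q_def by auto
    have deq: "bb powr (1/4) * eps powr (9/4) = q * eps^2"
    proof -
      have "eps powr (9/4) = eps powr (2 + 1/4)" by simp
      also have "\<dots> = eps powr 2 * eps powr (1/4)" by (rule powr_add)
      also have "eps powr 2 = eps^2" using eps powr_realpow[of eps 2] by simp
      finally show ?thesis unfolding q_def using eps bbpos by (simp add: powr_mult)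
    qed
    define lN where "lN = ln (real n / eps^2)"
    have s': "real s \<ge> c * real m * lN / (q * eps^2)" using s unfolding deq lN_def .
    have "c * real m * lN / (q * eps^2) > 0" using c mpos lnpos qpos eps2 unfolding lN_def by simp
    then have spos: "real s > 0" using s' by linarith
    have EY: "measure_pmf.expectation ?P Y = real G / real m"
    proof -
      have "measure_pmf.expectation ?P Y = (1 / real s) * measure_pmf.expectation ?P (\<lambda>f. \<Sum>i\<in>{..<s}. ?X (f i))"
        unfolding Y_def by (rule integral_mult_right_zero)
      also have "measure_pmf.expectation ?P (\<lambda>f. \<Sum>i\<in>{..<s}. ?X (f i)) = (\<Sum>i\<in>{..<s}. measure_pmf.expectation (pmf_of_set E) ?X)"
      proof -
        have comp: "map_pmf (\<lambda>f. f i) ?P = pmf_of_set E" if i: "i \<in> {..<s}" for i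
          unfolding edge_samples_def using i by (subst Pi_pmf_component) auto
        have int: "integrable (measure_pmf ?P) (\<lambda>f. ?X (f i))" if i: "i \<in> {..<s}" for i
        proof -
          have "integrable (measure_pmf (map_pmf (\<lambda>f. f i) ?P)) ?X"
            unfolding comp[OF i] by (rule integrable_measure_pmf_finite) (simp add: finE Ene)
          then show ?thesis by simp
        qed
        have "measure_pmf.expectation ?P (\<lambda>f. \<Sum>i\<in>{..<s}. ?X (f i)) = (\<Sum>i\<in>{..<s}. measure_pmf.expectation ?P (\<lambda>f. ?X (f i)))"
          by (rule Bochner_Integration.integral_sum) (rule int)
        also have "\<dots> = (\<Sum>i\<in>{..<s}. measure_pmf.expectation (map_pmf (\<lambda>f. f i) ?P) ?X)"
          by simp
        also have "\<dots> = (\<Sum>i\<in>{..<s}. measure_pmf.expectation (pmf_of_set E) ?X)"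
          by (intro sum.cong refl) (simp only: comp)
        finally show ?thesis .
      qed
      also have "measure_pmf.expectation (pmf_of_set E) ?X = real G / real m"
        using finE Ene Wsum unfolding m_def by (simp add: integral_pmf_of_set)
      finally show ?thesis using spos by simp
    qed
    have mEY: "real m * measure_pmf.expectation ?P Y = real G" using EY mpos by simp
    have part1: "b * (1 - c_H * eps) \<le> real G" "real G \<le> b" using GB Bdle by (simp_all add: algebra_simps)
    have part2: "measure_pmf.prob ?P {f. real m * Y f < b * (1 - 2 * c_H * eps)} < eps\<^sup>2 / real n"
      if cc: "c > 1 / (2 * (1 - c_H * eps))"
    proof (cases "c_H * eps < 1/2")
      case False
      have "{f. real m * Y f < b * (1 - 2 * c_H * eps)} = {}"
      proof -
        have "b * (1 - 2 * c_H * eps) \<le> 0" using False bpos by (intro mult_nonneg_nonpos) auto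
        moreover have "0 \<le> real m * Y f" for f using Ynn mpos by simp
        ultimately show ?thesis by (auto simp: not_less) (meson order.trans not_less)
      qed
      then show ?thesis using eps npos by simp
    next
      case True
      define \<mu> where "\<mu> = real G / real m"
      define \<Delta> where "\<Delta> = \<mu> - b * (1 - 2 * c_H * eps) / real m"
      define M where "M = 2 * bb / q"
      have Mpos: "M > 0" using bbpos qpos by (simp add: M_def)
      have cH: "c_H > 0" by (simp add: c_H_def)
      have mupos: "\<mu> > 0"
      proof -
        have "b * (1 - c_H * eps) > 0" using True bpos by simp
        then show ?thesis using part1 mpos unfolding \<mu>_def by simp
      qed
      have mule: "\<mu> \<le> b / real m" using part1 mpos unfolding \<mu>_def by (simp add: divide_right_mono)
      have Dge: "\<Delta> \<ge> c_H * eps * b / real m"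
      proof -
        have "real G - b * (1 - 2 * c_H * eps) \<ge> c_H * eps * b" using part1 by (simp add: algebra_simps)
        then have "(real G - b * (1 - 2 * c_H * eps)) / real m \<ge> c_H * eps * b / real m"
          using mpos by (simp add: divide_right_mono)
        then show ?thesis unfolding \<Delta>_def \<mu>_def by (simp add: diff_divide_distrib)
      qed
      have Apos: "c_H * eps * b / real m > 0" using cH eps bpos mpos by simp
      have Dpos: "\<Delta> > 0" using Dge Apos by linarith
      have Xb: "0 \<le> ?X e \<and> ?X e \<le> M" if e: "e \<in> E" for e
      proof (cases "e \<in> PL")
        case False then show ?thesis unfolding wt_edge_def using Mpos by simp
      next
        case True
        then have "e \<notin> PH" using PHPL by blast
        then have "\<not> heavy U L E bb ww eps e" using part e unfolding appropriate_def by blast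
        then have "real (edge_butterflies U L E e) \<le> 2 * bb powr (3/4) / eps powr (1/4)"
          unfolding heavy_def by simp
        then have "real (edge_butterflies U L E e) \<le> M" unfolding Teq M_def .
        then show ?thesis using wt_le[OF finB, of PL e] by simp
      qed
      have mueq: "\<mu> = sum ?X E / real (card E)"
        unfolding \<mu>_def m_def using Wsum by simp
      have ch: "measure_pmf.prob ?P {f. (\<Sum>i<s. ?X (f i)) \<le> real s * (\<mu> - \<Delta>)}
                  \<le> exp (- real s * \<Delta>^2 / (2 * M * \<mu>))"
        unfolding edge_samples_def
        by (rule chernoff_lower[OF finE Ene Xb Mpos mueq mupos Dpos])
      have sub: "{f. real m * Y f < b * (1 - 2 * c_H * eps)} \<subseteq> {f. (\<Sum>i<s. ?X (f i)) \<le> real s * (\<mu> - \<Delta>)}"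
      proof
        fix f assume "f \<in> {f. real m * Y f < b * (1 - 2 * c_H * eps)}"
        then have "real m * ((1 / real s) * (\<Sum>i<s. ?X (f i))) < b * (1 - 2 * c_H * eps)"
          unfolding Y_def by simp
        then have "(\<Sum>i<s. ?X (f i)) < real s * (b * (1 - 2 * c_H * eps) / real m)"
          using spos mpos by (simp add: field_simps)
        moreover have "\<mu> - \<Delta> = b * (1 - 2 * c_H * eps) / real m" unfolding \<Delta>_def by simp
        ultimately show "f \<in> {f. (\<Sum>i<s. ?X (f i)) \<le> real s * (\<mu> - \<Delta>)}" by simp
      qed
      have expo: "real s * \<Delta>^2 / (2 * M * \<mu>) > lN"
      proof -
        define A where "A = c_H * eps * b / real m"
        have "real s * A^2 / (2 * M * (b / real m)) \<le> real s * \<Delta>^2 / (2 * M * \<mu>)"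
        proof (rule frac_le)
          show "0 \<le> real s * \<Delta>^2" by simp
          have "A^2 \<le> \<Delta>^2" using Dge Apos unfolding A_def by (intro power_mono) auto
          then show "real s * A^2 \<le> real s * \<Delta>^2" by (intro mult_left_mono) auto
          show "0 < 2 * M * \<mu>" using Mpos mupos by simp
          show "2 * M * \<mu> \<le> 2 * M * (b / real m)" using mule Mpos by (intro mult_left_mono) auto
        qed
        moreover have "real s * A^2 / (2 * M * (b / real m)) = real s * (c_H^2 * eps^2 * b * q / (4 * real m * bb))"
          unfolding A_def M_def using mpos bpos bbpos qpos by (simp add: field_simps power2_eq_square)
        moreover have "real s * (c_H^2 * eps^2 * b * q / (4 * real m * bb)) \<ge>
             (c * real m * lN / (q * eps^2)) * (c_H^2 * eps^2 * b * q / (4 * real m * bb))"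
          using s' by (intro mult_right_mono) (use mpos bpos bbpos qpos eps in simp_all)
        moreover have "(c * real m * lN / (q * eps^2)) * (c_H^2 * eps^2 * b * q / (4 * real m * bb))
             = c * lN * c_H^2 * (b / bb) / 4"
          using mpos bpos bbpos qpos eps by (simp add: field_simps power2_eq_square)
        moreover have "c * lN * c_H^2 * (b / bb) / 4 \<ge> c * lN * c_H^2 * (1/2) / 4"
        proof -
          have "b / bb \<ge> 1/2" using bb bbpos by (simp add: field_simps)
          moreover have "c * lN * c_H^2 \<ge> 0" using c lnpos unfolding lN_def by simp
          ultimately show ?thesis by (intro divide_right_mono mult_left_mono) auto
        qed
        moreover have "c * lN * c_H^2 * (1/2) / 4 > lN"
        proof -
          have "1 - c_H * eps > 0" "1 - c_H * eps \<le> 1" using True cH eps by auto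
          then have "1 / (2 * (1 - c_H * eps)) \<ge> 1/2" by (simp add: field_simps)
          then have c2: "c > 1/2" using cc by linarith
          have "c * c_H^2 / 8 > 1" using c2 unfolding c_H_def by simp
          then have "lN * (c * c_H^2 / 8) > lN * 1" using lnpos unfolding lN_def by (intro mult_strict_left_mono) auto
          then show ?thesis by (simp add: field_simps)
        qed
        ultimately show ?thesis by linarith
      qed
      have "measure_pmf.prob ?P {f. real m * Y f < b * (1 - 2 * c_H * eps)}
            \<le> measure_pmf.prob ?P {f. (\<Sum>i<s. ?X (f i)) \<le> real s * (\<mu> - \<Delta>)}"
        by (rule measure_pmf.finite_measure_mono[OF sub]) simp
      also have "\<dots> \<le> exp (- real s * \<Delta>^2 / (2 * M * \<mu>))" by (rule ch)
      also have "\<dots> < exp (- lN)" using expo by simp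
      also have "exp (- lN) = eps^2 / real n"
        unfolding lN_def using N1 eps2 npos by (simp add: exp_minus field_simps)
      finally show ?thesis .
    qed
    show ?thesis using mEY part1 part2 by simp
  qed
qed


end
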